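(* For every integer $n\geq 3$, the shortest binary word that has $n$ distinct factorizations in two Lyndon words is the word $00(10)^{n-2}11$, which has length $2n$.
   Context: Words are over the alphabet $\{0,1\}$ with the lexicographic order induced by $0<1$. A Lyndon word is a nonempty primitive word that is lexicographically strictly smaller than all of its other rotations (conjugates) (equivalently, strictly smaller than all its nonempty proper suffixes). A factorization of a word $u$ in two Lyndon words is a pair $(x,y)$ of Lyndon words (both nonempty) with $u=xy$; two such factorizations are distinct if the pairs differ. "The shortest" means that this word has $n$ distinct such factorizations, and every other binary word with (at least) $n$ distinct such factorizations is strictly longer. *)

theory Defs
  imports Main
begin

definition binword :: "nat list \<Rightarrow> bool" where
  "binword w \<longleftrightarrow> set w \<subseteq> {0, 1}"

text \<open>Strict lexicographic order (a proper prefix is smaller).\<close>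
definition lex_less :: "nat list \<Rightarrow> nat list \<Rightarrow> bool" where
  "lex_less u v \<longleftrightarrow> (u, v) \<in> lexord {(a, b). a < b}"

text \<open>Lyndon word: nonempty and strictly smaller than all its other rotations
  (this forces primitivity, since a non-primitive word equals a nontrivial rotation).\<close>
definition lyndon :: "nat list \<Rightarrow> bool" where
  "lyndon w \<longleftrightarrow> w \<noteq> [] \<and> (\<forall>i. 0 < i \<and> i < length w \<longrightarrow> lex_less w (rotate i w))"

definition lyndon_facts :: "nat list \<Rightarrow> (nat list \<times> nat list) set" where
  "lyndon_facts u = {(x, y). lyndon x \<and> lyndon y \<and> x @ y = u}"

definition num_lyndon_facts :: "nat list \<Rightarrow> nat" where
  "num_lyndon_facts u = card (lyndon_facts u)"

end

theory Submission imports Defs begin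

lemma lex_less_lexordp: "lex_less u v = ord_class.lexordp u v"
  by (simp add: lex_less_def lexordp_conv_lexord)

lemma lex_less_irrefl: "\<not> lex_less u u"
  by (simp add: lex_less_lexordp lexordp_irreflexive')

lemma lex_less_asym: "lex_less u v \<Longrightarrow> \<not> lex_less v u"
  by (metis lex_less_lexordp lexordp_conv_lexordp_eq)

lemma lex_crit:
  assumes "length a = length b" "j < length a" "\<forall>q<j. a!q = b!q" "a!j < b!j"
  shows "lex_less a b"
proof -
  have "take j a = take j b"
    using assms by (intro nth_equalityI) auto
  then show ?thesis unfolding lex_less_def lexord_take_index_conv
    using assms by auto
qed

lemma bin_nth: "binword w \<Longrightarrow> p < length w \<Longrightarrow> w!p = 0 \<or> w!p = 1"
  unfolding binword_def using nth_mem by fastforce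

lemma lyn_hd:
  assumes "binword w" "lyndon w" "length w \<ge> 2" shows "w!0 = 0"
proof (rule ccontr)
  assume "w!0 \<noteq> 0"
  then have w0: "w!0 = 1" using bin_nth[OF assms(1)] assms(3) by force
  show False
  proof (cases "\<exists>p<length w. w!p = 0")
    case True then obtain p where p: "p<length w" "w!p=0" by auto
    have "p>0" using w0 p by (cases p) auto
    have lt: "lex_less w (rotate p w)" using assms(2) p \<open>p>0\<close> by (auto simp: lyndon_def)
    have "w \<noteq> []" using p by auto
    then have r0: "rotate p w ! 0 = 0" using p nth_rotate[of 0 w p] by simp
    have "lex_less (rotate p w) w"
      by (rule lex_crit[where j=0]) (use p w0 r0 in auto)
    then show False using lt lex_less_asym by blast
  next
    case False
    then have all1: "\<forall>p<length w. w!p = 1" using bin_nth[OF assms(1)] by blast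
    have "rotate 1 w = w"
    proof (rule nth_equalityI)
      fix q assume "q < length (rotate 1 w)"
      then have "q < length w" by simp
      then have "rotate 1 w ! q = w!((1+q) mod length w)" by (rule nth_rotate)
      moreover have "(1+q) mod length w < length w" using assms(3) by (intro mod_less_divisor) (cases w; simp)
      ultimately show "rotate 1 w ! q = w ! q" using all1 \<open>q < length w\<close> by metis
    qed simp
    moreover have "lex_less w (rotate 1 w)" using assms(2,3) by (auto simp: lyndon_def)
    ultimately show False using lex_less_irrefl by metis
  qed
qed

lemma lyn_last:
  assumes "binword w" "lyndon w" "length w \<ge> 2" shows "w!(length w - 1) = 1"
proof (rule ccontr)
  define L where "L = length w"
  assume "w!(length w - 1) \<noteq> 1"
  then have wl: "w!(L-1) = 0" using bin_nth[OF assms(1), of "length w - 1"] assms(3) unfolding L_def by force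
  have w0: "w!0 = 0" using lyn_hd assms by blast
  have "lex_less w (rotate (L-1) w)" using assms(2,3) by (auto simp: lyndon_def L_def)
  then obtain i where i: "i < L" "take i w = take i (rotate (L-1) w)" "w!i < rotate (L-1) w ! i"
    unfolding lex_less_def lexord_take_index_conv L_def by auto
  have r: "rotate (L-1) w ! q = (if q = 0 then 0 else w!(q-1))" if "q < L" for q
  proof -
    have "rotate (L-1) w ! q = w!((L-1+q) mod L)" using that by (simp add: nth_rotate L_def)
    also have "\<dots> = (if q = 0 then w!(L-1) else w!(q-1))"
    proof (cases q)
      case (Suc q') then have "(L-1+q) mod L = q'" using that by (simp add: mod_if)
      then show ?thesis using Suc by simp
    qed (use assms(3) L_def in simp)
    finally show ?thesis using wl by simp
  qed
  have eq: "w!q = rotate (L-1) w ! q" if "q < i" for q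
    using i(1,2) that by (metis length_rotate nth_take L_def)
  have z: "w!q = 0" if "q < i" for q
    using that
  proof (induction q)
    case 0 then show ?case using w0 by simp
  next
    case (Suc q) then show ?case using eq[of "Suc q"] r[of "Suc q"] i(1) by simp
  qed
  show False
  proof (cases i)
    case 0 then show ?thesis using i(3) r[of 0] w0 i(1) by simp
  next
    case (Suc i') then show ?thesis using i(3) r[of i] i(1) z[of i'] by simp
  qed
qed


lemma binword_take: "binword u \<Longrightarrow> binword (take i u)"
  unfolding binword_def using set_take_subset by fast
lemma binword_drop: "binword u \<Longrightarrow> binword (drop i u)"
  unfolding binword_def using set_drop_subset by fast

lemma no_adj:
  assumes "binword u" "0 < i" "i+1 < length u" "lyndon (drop i u)" "lyndon (take (i+1) u)"
  shows False
proof -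
  have "drop i u ! 0 = 0" using lyn_hd[OF binword_drop[OF assms(1)] assms(4)] assms(3) by simp
  moreover have "take (i+1) u ! (length (take (i+1) u) - 1) = 1"
    using lyn_last[OF binword_take[OF assms(1)] assms(5)] assms(2,3) by simp
  ultimately show False using assms(2,3) by simp
qed

definition cuts :: "nat list \<Rightarrow> nat set" where
  "cuts u = {i. i \<le> length u \<and> lyndon (take i u) \<and> lyndon (drop i u)}"

lemma cuts_range: "i \<in> cuts u \<Longrightarrow> 0 < i \<and> i < length u"
  unfolding cuts_def lyndon_def by auto

lemma cuts_sub: "cuts u \<subseteq> {1..<length u}"
  using cuts_range by fastforce

lemma finite_cuts: "finite (cuts u)"
  using cuts_sub finite_subset by blast

lemma num_cuts: "num_lyndon_facts u = card (cuts u)"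
proof -
  have "lyndon_facts u = (\<lambda>i. (take i u, drop i u)) ` cuts u"
  proof (intro set_eqI iffI)
    fix z assume "z \<in> lyndon_facts u"
    then obtain x y where z: "z = (x,y)" "lyndon x" "lyndon y" "x @ y = u"
      unfolding lyndon_facts_def by auto
    then have "length x \<in> cuts u" unfolding cuts_def by auto
    moreover have "z = (take (length x) u, drop (length x) u)" using z by auto
    ultimately show "z \<in> (\<lambda>i. (take i u, drop i u)) ` cuts u" by blast
  next
    fix z assume "z \<in> (\<lambda>i. (take i u, drop i u)) ` cuts u"
    then show "z \<in> lyndon_facts u" unfolding cuts_def lyndon_facts_def by auto
  qed
  moreover have "inj_on (\<lambda>i. (take i u, drop i u)) (cuts u)"
  proof (rule inj_onI)
    fix i j assume "i \<in> cuts u" "j \<in> cuts u" "(take i u, drop i u) = (take j u, drop j u)"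
    then show "i = j" unfolding cuts_def by (metis length_take min.absorb2 mem_Collect_eq prod.inject)
  qed
  ultimately show ?thesis unfolding num_lyndon_facts_def by (simp add: card_image)
qed

lemma cuts_disj: "binword u \<Longrightarrow> cuts u \<inter> Suc ` cuts u = {}"
proof (rule ccontr)
  assume b: "binword u" and "cuts u \<inter> Suc ` cuts u \<noteq> {}"
  then obtain i where i: "i \<in> cuts u" "Suc i \<in> cuts u" by auto
  then show False using no_adj[OF b, of i] cuts_range[OF i(1)] cuts_range[OF i(2)]
    unfolding cuts_def by auto
qed

lemma card_bound:
  assumes "binword u"
  shows "2 * card (cuts u) \<le> length u"
    and "2 * card (cuts u) = length u \<Longrightarrow> cuts u \<union> Suc ` cuts u = {1..length u}"
proof -
  let ?S = "cuts u"
  have sub: "?S \<union> Suc ` ?S \<subseteq> {1..length u}" using cuts_sub by fastforce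
  have c: "card (?S \<union> Suc ` ?S) = 2 * card ?S"
    using card_Un_disjoint[OF finite_cuts finite_imageI[OF finite_cuts] cuts_disj[OF assms]]
    by (simp add: card_image)
  show "2 * card ?S \<le> length u" using card_mono[OF _ sub] c by simp
  assume "2 * card ?S = length u"
  then show "?S \<union> Suc ` ?S = {1..length u}" using card_subset_eq[OF _ sub] c by simp
qed


lemma odd_cuts:
  assumes "binword u" "2 * card (cuts u) = length u"
  shows "2*j+1 < length u \<Longrightarrow> 2*j+1 \<in> cuts u"
proof (induction j)
  case 0
  have "1 \<in> cuts u \<union> Suc ` cuts u" using card_bound(2)[OF assms] 0 by auto
  moreover have "0 \<notin> cuts u" using cuts_range by blast
  ultimately show ?case by auto
next
  case (Suc j)
  have "2*j+3 \<in> cuts u \<union> Suc ` cuts u" using card_bound(2)[OF assms] Suc.prems by auto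
  moreover have "2*j+1 \<in> cuts u" using Suc by simp
  ultimately have "2*j+3 \<in> cuts u \<or> 2*j+2 \<in> cuts u \<inter> Suc ` cuts u" by force
  then have "2*j+3 \<in> cuts u" using cuts_disj[OF assms(1)] by blast
  moreover have "2*Suc j+1 = 2*j+3" by simp
  ultimately show ?case by metis
qed

definition wfw :: "nat \<Rightarrow> nat \<Rightarrow> nat" where
  "wfw n p = (if p = 2*n-1 then 1 else if p = 0 \<or> odd p then 0 else 1)"

lemma extremal_letters:
  assumes "binword u" "2 * card (cuts u) = length u" "length u = 2*n" "n \<ge> 2" "p < 2*n"
  shows "u!p = wfw n p"
proof -
  have oc: "i \<in> cuts u" if "odd i" "i < 2*n" for i
    using odd_cuts[OF assms(1,2), of "i div 2"] that assms(3) by (metis odd_two_times_div_two_succ)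
  have bt: "binword (take i u)" "binword (drop i u)" for i using binword_take binword_drop assms(1) by auto
  consider "p = 2*n-1" | "p = 0" | "odd p" "p < 2*n-1" | "even p" "p > 0" "p < 2*n-1"
    using assms(5) by linarith
  then show ?thesis
  proof cases
    case 1
    from assms(4) obtain m where m: "n = Suc (Suc m)" by (metis add_2_eq_Suc le_Suc_ex)
    have "1 \<in> cuts u" using oc[of 1] assms by simp
    then have "lyndon (drop 1 u)" unfolding cuts_def by simp
    from lyn_last[OF bt(2) this] show ?thesis using 1 assms m by (simp add: wfw_def)
  next
    case 2
    have "2*n-1 \<in> cuts u" using oc[of "2*n-1"] assms by simp
    then have "lyndon (take (2*n-1) u)" unfolding cuts_def by simp
    from lyn_hd[OF bt(1) this] show ?thesis using 2 assms by (simp add: wfw_def)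
  next
    case 3
    have "p \<in> cuts u" using oc[of p] 3 by simp
    then have "lyndon (drop p u)" unfolding cuts_def by simp
    from lyn_hd[OF bt(2) this] show ?thesis using 3 assms by (simp add: wfw_def)
  next
    case 4
    have "p+1 \<in> cuts u" using oc[of "p+1"] 4 by simp
    then have "lyndon (take (p+1) u)" unfolding cuts_def by simp
    from lyn_last[OF bt(1) this] show ?thesis using 4 assms by (simp add: wfw_def)
  qed
qed

lemma lyn_pref:
  assumes "length t = 2*k+1" "\<forall>q<2*k+1. t!q = (if q=0 \<or> odd q then 0 else 1)"
  shows "lyndon t"
  unfolding lyndon_def
proof (intro conjI allI impI)
  show "t \<noteq> []" using assms by auto
  fix i assume i: "0 < i \<and> i < length t"
  have r: "rotate i t ! q = t!(i+q)" if "i + q < length t" for q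
    using nth_rotate[of q t i] that by simp
  show "lex_less t (rotate i t)"
  proof (cases "even i")
    case True
    show ?thesis by (rule lex_crit[where j=0]) (use i True assms r[of 0] in auto)
  next
    case False
    have "i+1 < length t" using i False assms(1) by presburger
    then show ?thesis using lex_crit[where j=1 and a=t and b="rotate i t"] i False assms r[of 0] r[of 1]
      by (auto simp: less_Suc_eq)
  qed
qed

lemma lyn_suf:
  assumes "length d = 2*k+1" "\<forall>q<2*k+1. d!q = (if q = 2*k then 1 else if even q then 0 else 1)"
  shows "lyndon d"
  unfolding lyndon_def
proof (intro conjI allI impI)
  show "d \<noteq> []" using assms by auto
  fix i assume i: "0 < i \<and> i < length d"
  have r: "rotate i d ! q = d!(i+q)" if "i + q < length d" for q
    using nth_rotate[of q d i] that by simp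
  show "lex_less d (rotate i d)"
  proof (cases "even i")
    case False
    show ?thesis by (rule lex_crit[where j=0]) (use i False assms r[of 0] in auto)
  next
    case True
    show ?thesis
    proof (rule lex_crit[where j="2*k-i"])
      show "\<forall>q<2*k-i. d!q = rotate i d ! q"
      proof (intro allI impI)
        fix q assume "q < 2*k-i"
        then show "d!q = rotate i d ! q" using r[of q] assms True i by auto
      qed
      show "d ! (2*k-i) < rotate i d ! (2*k-i)" using r[of "2*k-i"] assms True i by auto
    qed (use i assms in auto)
  qed
qed


lemma cr: "concat (replicate k [1,0::nat]) = map (\<lambda>p. if even p then 1 else 0) [0..<2*k]"
proof (induction k)
  case (Suc k)
  have "replicate (Suc k) [1,0::nat] = replicate k [1,0] @ [[1,0]]"
    by (simp add: replicate_append_same)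
  then show ?case using Suc by simp
qed simp

lemma w_nth:
  assumes "n \<ge> 3" "w = [0, 0] @ concat (replicate (n - 2) [1, 0]) @ [1, 1]"
  shows "length w = 2*n" "p < 2*n \<Longrightarrow> w!p = wfw n p"
proof -
  have w: "w = [0, 0] @ map (\<lambda>p. if even p then 1 else 0) [0..<2*(n-2)] @ [1, 1]"
    using assms cr by simp
  show "length w = 2*n" using w assms by simp
  assume p: "p < 2*n"
  consider "p < 2" | "2 \<le> p" "p < 2*n-2" | "p = 2*n-2" | "p = 2*n-1" using p by linarith
  then show "w!p = wfw n p"
  proof cases
    case 1 then show ?thesis using w assms(1) by (cases p) (auto simp: wfw_def nth_append)
  next
    case 2
    then obtain q where q: "p = Suc (Suc q)" by (metis add_2_eq_Suc le_Suc_ex)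
    then have "q < 2*(n-2)" using 2 by simp
    then have "w!p = (if even q then 1 else 0)" using w q by (simp add: nth_append)
    then show ?thesis using 2 q by (auto simp: wfw_def)
  next
    case 3
    obtain m where m: "n = m + 3" using assms(1) by (metis add.commute le_Suc_ex)
    have "w!p = 1" using w m 3 by (simp add: nth_append)
    then show ?thesis using 3 assms by (auto simp: wfw_def)
  next
    case 4
    obtain m where m: "n = m + 3" using assms(1) by (metis add.commute le_Suc_ex)
    have "w!p = 1" using w m 4 by (simp add: nth_append)
    then show ?thesis using 4 assms by (auto simp: wfw_def)
  qed
qed


lemma cuts_w:
  assumes "n \<ge> 3" "length w = 2*n" "\<forall>p<2*n. w!p = wfw n p"
  shows "cuts w = {p. odd p \<and> p < 2*n}"
proof -
  have bw: "binword w" unfolding binword_def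
  proof
    fix x assume "x \<in> set w"
    then obtain p where "p < length w" "x = w!p" by (auto simp: in_set_conv_nth)
    then show "x \<in> {0,1}" using assms by (auto simp: wfw_def)
  qed
  have sup: "p \<in> cuts w" if p: "odd p" "p < 2*n" for p
  proof -
    obtain k where k: "p = 2*k+1" using p(1) oddE by blast
    have l1: "lyndon (take p w)"
    proof (rule lyn_pref[where k=k])
      show "length (take p w) = 2*k+1" using k p assms by simp
      show "\<forall>q<2*k+1. take p w ! q = (if q = 0 \<or> odd q then 0 else 1)"
        using k p assms by (auto simp: wfw_def)
    qed
    have l2: "lyndon (drop p w)"
    proof (rule lyn_suf[where k="n-1-k"])
      show "length (drop p w) = 2*(n-1-k)+1" using k p assms by simp
      show "\<forall>q<2*(n-1-k)+1. drop p w ! q = (if q = 2*(n-1-k) then 1 else if even q then 0 else 1)"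
      proof (intro allI impI)
        fix q assume q: "q < 2*(n-1-k)+1"
        then have "drop p w ! q = wfw n (p+q)" using assms k p by simp
        moreover have "p + q = 2*n-1 \<longleftrightarrow> q = 2*(n-1-k)" using k p q by auto
        moreover have "odd (p+q) \<longleftrightarrow> even q" using k by simp
        ultimately show "drop p w ! q = (if q = 2*(n-1-k) then 1 else if even q then 0 else 1)"
          using k by (auto simp: wfw_def)
      qed
    qed
    show ?thesis using l1 l2 p assms unfolding cuts_def by simp
  qed
  have sub: "p \<in> {p. odd p \<and> p < 2*n}" if p: "p \<in> cuts w" for p
  proof (rule ccontr)
    assume "p \<notin> {p. odd p \<and> p < 2*n}"
    then have "even p" using cuts_range[OF p] assms by auto
    moreover have "p < 2*n" using cuts_range[OF p] assms by simp
    ultimately have "Suc p < 2*n" by presburger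
    then have "Suc p \<in> cuts w" using sup[of "Suc p"] \<open>even p\<close> by simp
    then show False using p cuts_disj[OF bw] by blast
  qed
  show ?thesis using sup sub by blast
qed

lemma card_odds: "card {p. odd p \<and> p < 2*(n::nat)} = n"
proof -
  have "{p. odd p \<and> p < 2*n} = (\<lambda>j. 2*j+1) ` {..<n}"
  proof (intro set_eqI iffI)
    fix p assume "p \<in> {p. odd p \<and> p < 2*n}"
    then show "p \<in> (\<lambda>j. 2*j+1) ` {..<n}"
      by (auto elim!: oddE intro!: image_eqI)
  qed auto
  moreover have "inj_on (\<lambda>j. 2*j+1::nat) {..<n}" by (rule inj_onI) simp
  ultimately show ?thesis by (simp add: card_image)
qed

theorem mainTheorem3:
  fixes n :: nat
  assumes "n \<ge> 3"
  defines "w \<equiv> [0, 0] @ concat (replicate (n - 2) [1, 0]) @ [1, 1]"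
  shows "binword w \<and> num_lyndon_facts w = n \<and> length w = 2 * n \<and>
         (\<forall>u. binword u \<and> num_lyndon_facts u \<ge> n \<and> u \<noteq> w \<longrightarrow> length u > length w)"
proof -
  have len: "length w = 2*n" using w_nth(1)[OF assms(1) w_def[THEN meta_eq_to_obj_eq]] .
  have nth: "\<forall>p<2*n. w!p = wfw n p" using w_nth(2)[OF assms(1) w_def[THEN meta_eq_to_obj_eq]] by blast
  have bw: "binword w" unfolding binword_def
  proof
    fix x assume "x \<in> set w"
    then obtain p where "p < length w" "x = w!p" by (auto simp: in_set_conv_nth)
    then show "x \<in> {0,1}" using nth len by (auto simp: wfw_def)
  qed
  have nw: "num_lyndon_facts w = n"
    using cuts_w[OF assms(1) len nth] card_odds num_cuts by simp
  have "length u > length w" if u: "binword u" "num_lyndon_facts u \<ge> n" "u \<noteq> w" for u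
  proof (rule ccontr)
    assume "\<not> length u > length w"
    then have "length u \<le> 2*n" using len by simp
    moreover have "card (cuts u) \<ge> n" using u num_cuts by simp
    moreover note card_bound(1)[OF u(1)]
    ultimately have eq: "2 * card (cuts u) = length u" "length u = 2*n" by linarith+
    have "u = w"
    proof (rule nth_equalityI)
      show "length u = length w" using eq len by simp
      fix p assume "p < length u"
      then show "u!p = w!p" using extremal_letters[OF u(1) eq(1) eq(2), of p] assms nth eq by simp
    qed
    then show False using u by simp
  qed
  then show ?thesis using bw nw len by blast
qed

end
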